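(* Let $X\subset\mathbf{C}$ be a compact subset. The following conditions are equivalent: (1) there exists $f\in\mathcal{F}_0$ such that $X=f([0,1])$; (2) $0\in X$, there exists a real number $\alpha$ such that $X$ is symmetric with respect to the line $\mathrm{Re}(z)=\alpha$, and there exists a continuous function $f\colon[0,1]\to\mathbf{C}$ such that $X=f([0,1])$; (3) $0\in X$, there exists a real number $\alpha$ such that $X$ is symmetric with respect to the line $\mathrm{Re}(z)=\alpha$, and $X$ is connected and locally connected.
   Context: $\mathcal{F}_0$ denotes the set of all continuous functions $f\colon[0,1]\to\mathbf{C}$ such that $f(t)+\overline{f(1-t)}=f(1)$ for all $t\in[0,1]$. Symmetry of $X$ with respect to the line $\mathrm{Re}(z)=\alpha$ means $X$ is invariant under $z\mapsto 2\alpha-\bar z$. *)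

theory Defs
  imports "HOL-Analysis.Analysis"
begin

definition F0 :: "(real \<Rightarrow> complex) set" where
  "F0 = {f. continuous_on {0..1} f \<and>
            (\<forall>t\<in>{0..1}. f t + cnj (f (1 - t)) = f 1)}"

definition symmetric_wrt_line :: "complex set \<Rightarrow> real \<Rightarrow> bool" where
  "symmetric_wrt_line X \<alpha> \<longleftrightarrow> (\<lambda>z. 2 * complex_of_real \<alpha> - cnj z) ` X = X"

end

theory Submission
  imports Defs
begin


lemma image_lc:
  fixes f :: "real \<Rightarrow> complex"
  assumes "continuous_on {0..1} f"
  shows "connected (f`{0..1}) \<and> locally connected (f`{0..1})"
proof
  show "connected (f`{0..1})" using assms connected_continuous_image connected_Icc by blast
  show "locally connected (f`{0..1})"
    apply (rule locally_connected_quotient_image)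
     apply (rule convex_imp_locally_connected) apply simp
    apply (rule Abstract_Topology_2.continuous_imp_quotient_map)
    using assms by auto
qed

lemma F0_imp:
  assumes "f \<in> F0"
  shows "0 \<in> f`{0..1} \<and> (\<exists>\<alpha>. symmetric_wrt_line (f`{0..1}) \<alpha>) \<and> continuous_on {0..1} f"
proof -
  have c: "continuous_on {0..1} f" and e: "\<And>t. t\<in>{0..1} \<Longrightarrow> f t + cnj (f (1 - t)) = f 1"
    using assms by (auto simp: F0_def)
  have "f 1 + cnj (f 0) = f 1" using e[of 1] by simp
  hence f0: "f 0 = 0" by (metis add_cancel_left_right complex_cnj_zero_iff)
  have "f (1/2) + cnj (f (1/2)) = f 1" using e[of "1/2"] by (simp add: field_simps)
  hence im: "Im (f 1) = 0" by (metis complex_add_cnj Im_complex_of_real)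
  define \<alpha> where "\<alpha> = Re (f 1) / 2"
  have r: "2 * complex_of_real \<alpha> = f 1" using im unfolding \<alpha>_def by (simp add: complex_eq_iff)
  have s: "2 * complex_of_real \<alpha> - cnj (f t) = f (1 - t)" if "t \<in> {0..1}" for t
  proof -
    have "f (1-t) + cnj (f (1 - (1-t))) = f 1" using e[of "1-t"] that by simp
    thus ?thesis using r by (simp add: algebra_simps)
  qed
  have "(\<lambda>z. 2 * complex_of_real \<alpha> - cnj z) ` f`{0..1} = f`{0..1}"
  proof
    show "(\<lambda>z. 2 * complex_of_real \<alpha> - cnj z) ` f`{0..1} \<subseteq> f`{0..1}"
      using s by force
    show "f`{0..1} \<subseteq> (\<lambda>z. 2 * complex_of_real \<alpha> - cnj z) ` f`{0..1}"
    proof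
      fix z assume "z \<in> f`{0..1}"
      then obtain t where t: "t \<in> {0..1}" "z = f t" by auto
      have "z = 2 * complex_of_real \<alpha> - cnj (f (1-t))"
        using s[of "1-t"] t by (simp add: algebra_simps)
      thus "z \<in> (\<lambda>z. 2 * complex_of_real \<alpha> - cnj z) ` f`{0..1}" using t by auto
    qed
  qed
  thus ?thesis using c f0 unfolding symmetric_wrt_line_def by force
qed



lemma imp_F0:
  fixes g :: "real \<Rightarrow> complex"
  assumes g: "continuous_on {0..1} g" and X: "X = g`{0..1}" and "0 \<in> X"
    and sym: "symmetric_wrt_line X \<alpha>"
  shows "\<exists>f\<in>F0. X = f ` {0..1}"
proof -
  define \<sigma> where "\<sigma> = (\<lambda>z. 2 * complex_of_real \<alpha> - cnj z)"
  have sX: "\<sigma> ` X = X" using sym unfolding symmetric_wrt_line_def \<sigma>_def by simp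
  have pc: "path_connected X" using X g path_connected_continuous_image
    by (metis convex_imp_path_connected convex_real_interval(5))
  hence cX: "connected X" by (simp add: path_connected_imp_connected)
  have a2: "complex_of_real (2*\<alpha>) \<in> X" using sX \<open>0 \<in> X\<close> unfolding \<sigma>_def by force
  obtain p where p: "p \<in> X" "Re p = \<alpha>"
  proof (cases "0 \<le> \<alpha>")
    case True
    then obtain z where "z \<in> X" "z \<bullet> 1 = \<alpha>"
      using connected_ivt_component[OF cX \<open>0 \<in> X\<close> a2, of 1 \<alpha>] by auto
    thus ?thesis using that by simp
  next
    case False
    then obtain z where "z \<in> X" "z \<bullet> 1 = \<alpha>"
      using connected_ivt_component[OF cX a2 \<open>0 \<in> X\<close>, of 1 \<alpha>] by auto
    thus ?thesis using that by simp
  qed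
  have sp: "\<sigma> p = p" using p(2) unfolding \<sigma>_def by (simp add: complex_eq_iff)
  have g0: "g 0 \<in> X" "g 1 \<in> X" using X by auto
  obtain a where a: "path a" "path_image a \<subseteq> X" "pathstart a = 0" "pathfinish a = g 0"
    using pc \<open>0 \<in> X\<close> g0 unfolding path_connected_def by blast
  obtain b where b: "path b" "path_image b \<subseteq> X" "pathstart b = g 1" "pathfinish b = p"
    using pc \<open>p \<in> X\<close> g0 unfolding path_connected_def by blast
  define h where "h = a +++ g +++ b"
  have pg: "path g" using g by (simp add: path_def)
  have gb: "path (g +++ b)" using b pg by (simp add: pathstart_def pathfinish_def)
  have hp: "path h" unfolding h_def using a gb
    by (metis path_join pathfinish_def pathstart_def pathstart_join)
  have i1: "path_image (g +++ b) = X \<union> path_image b"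
    using b path_image_join[of g b] by (simp add: pathstart_def pathfinish_def path_image_def X)
  have "path_image h = path_image a \<union> path_image (g +++ b)"
    unfolding h_def using a path_image_join[of a "g +++ b"] by (simp add: pathstart_def pathfinish_def joinpaths_def)
  hence hi: "path_image h = X" using i1 a b by blast
  have h0: "h 0 = 0" "h 1 = p" using a b unfolding h_def
    by (auto simp: joinpaths_def pathstart_def pathfinish_def)
  define f where "f = h +++ reversepath (\<sigma> \<circ> h)"
  have cs: "continuous_on UNIV \<sigma>" unfolding \<sigma>_def by (intro continuous_intros)
  have ps: "path (\<sigma> \<circ> h)" using hp cs unfolding path_def
    by (meson continuous_on_compose continuous_on_subset subset_UNIV)
  have fp: "path f" unfolding f_def
    by (rule path_join_imp) (use hp ps h0 sp path_reversepath[of "\<sigma> \<circ> h"] in \<open>auto simp: pathstart_def pathfinish_def reversepath_def\<close>)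
  have fi: "f ` {0..1} = X"
  proof -
    have "path_image f = path_image h \<union> path_image (reversepath (\<sigma> \<circ> h))" unfolding f_def using h0 sp
      by (intro path_image_join) (simp add: pathstart_def pathfinish_def reversepath_def)
    also have "\<dots> = path_image h \<union> \<sigma> ` path_image h"
      by (simp add: path_image_reversepath path_image_compose)
    finally have "path_image f = path_image h \<union> \<sigma> ` path_image h" .
    thus ?thesis using hi sX by (simp add: path_image_def)
  qed
  have f1: "f 1 = 2 * complex_of_real \<alpha>"
    unfolding f_def using h0 by (simp add: joinpaths_def reversepath_def \<sigma>_def)
  have fe: "f t + cnj (f (1 - t)) = f 1" if "t \<in> {0..1}" for t
  proof -
    consider "t < 1/2" | "t = 1/2" | "t > 1/2" by linarith
    thus ?thesis
    proof cases
      case 1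
      then show ?thesis unfolding f1 unfolding f_def
        by (simp add: joinpaths_def reversepath_def \<sigma>_def algebra_simps)
    next
      case 2
      then have "2 * t = 1" "2 - 2 * t = 1" by auto
      have "f t = h 1" "f (1 - t) = h 1" unfolding f_def using \<open>t = 1/2\<close> by (auto simp: joinpaths_def intro!: arg_cong[where f=h])
      then show ?thesis unfolding f1 using h0 p(2)
        by (simp add: complex_add_cnj complex_eq_iff)
    next
      case 3
      then show ?thesis unfolding f1 unfolding f_def
        by (simp add: joinpaths_def reversepath_def \<sigma>_def algebra_simps)
    qed
  qed
  have "f \<in> F0" unfolding F0_def using fp fe by (simp add: path_def)
  thus ?thesis using fi by auto
qed



definition ulc :: "complex set \<Rightarrow> real \<Rightarrow> real \<Rightarrow> bool" where
  "ulc X e d \<longleftrightarrow> (\<forall>x\<in>X. \<forall>y\<in>X. dist x y < d \<longrightarrow>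
      (\<exists>C. connected C \<and> C \<subseteq> X \<and> x \<in> C \<and> y \<in> C \<and> C \<subseteq> ball x e))"

lemma unif_lc:
  assumes "compact X" "locally connected X" "e > 0"
  shows "\<exists>d>0. ulc X e d"
proof -
  have "\<forall>z\<in>X. \<exists>U. openin (top_of_set X) U \<and> connected U \<and> z \<in> U \<and> U \<subseteq> X \<inter> ball z (e/2)"
  proof
    fix z assume z: "z \<in> X"
    have "openin (top_of_set X) (X \<inter> ball z (e/2))" by (simp add: openin_open_Int)
    moreover have "z \<in> X \<inter> ball z (e/2)" using z assms(3) by simp
    ultimately show "\<exists>U. openin (top_of_set X) U \<and> connected U \<and> z \<in> U \<and> U \<subseteq> X \<inter> ball z (e/2)"
      using assms(2) unfolding locally_connected by blast
  qed
  then obtain U where U: "\<And>z. z \<in> X \<Longrightarrow> openin (top_of_set X) (U z) \<and> connected (U z) \<and> z \<in> U z \<and> U z \<subseteq> X \<inter> ball z (e/2)"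
    by metis
  have "\<forall>z\<in>X. \<exists>W. open W \<and> U z = X \<inter> W" using U by (meson openin_open)
  then obtain W where W: "\<And>z. z \<in> X \<Longrightarrow> open (W z) \<and> U z = X \<inter> W z" by metis
  have cov: "X \<subseteq> \<Union> (W ` X)" using W U by blast
  obtain d where d: "0 < d" "\<And>x. x \<in> X \<Longrightarrow> \<exists>G \<in> W ` X. ball x d \<subseteq> G"
    using Heine_Borel_lemma[OF assms(1) cov] W by blast
  have "ulc X e d" unfolding ulc_def
  proof (intro ballI impI)
    fix x y assume xy: "x \<in> X" "y \<in> X" "dist x y < d"
    obtain z where z: "z \<in> X" "ball x d \<subseteq> W z" using d(2)[OF xy(1)] by blast
    have "x \<in> U z" "y \<in> U z" using xy z W d(1) by (auto simp: dist_commute)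
    moreover have "U z \<subseteq> ball x e"
    proof
      fix w assume "w \<in> U z"
      hence "dist z w < e/2" using U[OF z(1)] by auto
      moreover have "dist z x < e/2" using U[OF z(1)] \<open>x \<in> U z\<close> by auto
      moreover have "dist x w \<le> dist x z + dist z w" by (rule dist_triangle)
      ultimately show "w \<in> ball x e" by (simp add: dist_commute)
    qed
    ultimately show "\<exists>C. connected C \<and> C \<subseteq> X \<and> x \<in> C \<and> y \<in> C \<and> C \<subseteq> ball x e"
      using U[OF z(1)] by blast
  qed
  thus ?thesis using d(1) by blast
qed

definition dchain :: "complex set \<Rightarrow> real \<Rightarrow> complex \<Rightarrow> complex \<Rightarrow> (nat \<Rightarrow> complex) \<Rightarrow> nat \<Rightarrow> bool" where
  "dchain S d x y g m \<longleftrightarrow> g 0 = x \<and> (\<forall>k\<ge>m. g k = y) \<and> (\<forall>k. g k \<in> S) \<and> (\<forall>k. dist (g k) (g (Suc k)) < d)"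

definition cat :: "(nat \<Rightarrow> complex) \<Rightarrow> nat \<Rightarrow> (nat \<Rightarrow> complex) \<Rightarrow> nat \<Rightarrow> complex" where
  "cat g1 m1 g2 = (\<lambda>k. if k \<le> m1 then g1 k else g2 (k - m1))"

lemma dchain_cat:
  assumes "dchain S d x y g1 m1" "dchain S d y z g2 m2"
  shows "dchain S d x z (cat g1 m1 g2) (m1 + m2)"
    "cat g1 m1 g2 ` {..m1+m2} = g1 ` {..m1} \<union> g2 ` {..m2}"
proof -
  show "dchain S d x z (cat g1 m1 g2) (m1 + m2)"
    unfolding dchain_def
  proof (intro conjI allI impI)
    show "cat g1 m1 g2 0 = x" using assms unfolding dchain_def cat_def by simp
    fix k
    show "m1 + m2 \<le> k \<Longrightarrow> cat g1 m1 g2 k = z" using assms unfolding dchain_def cat_def by auto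
    show "cat g1 m1 g2 k \<in> S" using assms unfolding dchain_def cat_def by auto
    show "dist (cat g1 m1 g2 k) (cat g1 m1 g2 (Suc k)) < d"
    proof (cases "k < m1")
      case True then show ?thesis using assms unfolding dchain_def cat_def by auto
    next
      case False
      show ?thesis
      proof (cases "k = m1")
        case True
        then have "cat g1 m1 g2 k = g2 0" "cat g1 m1 g2 (Suc k) = g2 (Suc 0)"
          using assms unfolding dchain_def cat_def by auto
        then show ?thesis using assms unfolding dchain_def by metis
      next
        case False
        then have "cat g1 m1 g2 k = g2 (k - m1)" "cat g1 m1 g2 (Suc k) = g2 (Suc (k - m1))"
          using \<open>\<not> k < m1\<close> unfolding cat_def by (auto simp: Suc_diff_le)
        then show ?thesis using assms unfolding dchain_def by metis
      qed
    qed
  qed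
  show "cat g1 m1 g2 ` {..m1+m2} = g1 ` {..m1} \<union> g2 ` {..m2}"
  proof (intro equalityI subsetI)
    fix w assume "w \<in> cat g1 m1 g2 ` {..m1+m2}"
    then obtain k where k: "k \<le> m1 + m2" "w = cat g1 m1 g2 k" by auto
    show "w \<in> g1 ` {..m1} \<union> g2 ` {..m2}"
    proof (cases "k \<le> m1")
      case True then show ?thesis using k unfolding cat_def by auto
    next
      case False then show ?thesis using k unfolding cat_def by (auto intro!: imageI)
    qed
  next
    fix w assume "w \<in> g1 ` {..m1} \<union> g2 ` {..m2}"
    then consider k where "k \<le> m1" "w = g1 k" | k where "k \<le> m2" "w = g2 k" by auto
    then show "w \<in> cat g1 m1 g2 ` {..m1+m2}"
    proof cases
      case 1 then show ?thesis unfolding cat_def by (auto intro!: image_eqI[where x=k])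
    next
      case 2
      show ?thesis
      proof (cases "k = 0")
        case True
        then have "w = cat g1 m1 g2 m1" using 2 assms unfolding cat_def dchain_def by auto
        then show ?thesis by auto
      next
        case False
        then have "w = cat g1 m1 g2 (m1 + k)" using 2 unfolding cat_def by auto
        then show ?thesis using 2 by auto
      qed
    qed
  qed
qed

lemma dchain_mono: "dchain S d x y g m \<Longrightarrow> S \<subseteq> T \<Longrightarrow> dchain T d x y g m"
  unfolding dchain_def by blast

lemma dchain_exists:
  assumes "connected S" "d > 0" "x \<in> S" "y \<in> S"
  shows "\<exists>g m. dchain S d x y g m"
proof (rule connected_equivalence_relation[OF assms(1,3,4), where R = "\<lambda>x y. \<exists>g m. dchain S d x y g m"])
  fix a b assume "\<exists>g m. dchain S d a b g m"
  then obtain g m where gm: "dchain S d a b g m" by blast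
  define g' where "g' = (\<lambda>k. g (m - k))"
  have "dchain S d b a g' m" unfolding dchain_def g'_def
  proof (intro conjI allI impI)
    show "g (m - 0) = b" using gm unfolding dchain_def by simp
    fix k
    show "m \<le> k \<Longrightarrow> g (m - k) = a" using gm unfolding dchain_def by simp
    show "g (m - k) \<in> S" using gm unfolding dchain_def by simp
    show "dist (g (m - k)) (g (m - Suc k)) < d"
    proof (cases "k < m")
      case True
      then have "m - k = Suc (m - Suc k)" by simp
      then show ?thesis using gm unfolding dchain_def by (metis dist_commute)
    next
      case False then show ?thesis using assms(2) by simp
    qed
  qed
  then show "\<exists>g m. dchain S d b a g m" by blast
next
  fix a b c assume "\<exists>g m. dchain S d a b g m" "\<exists>g m. dchain S d b c g m"
  then show "\<exists>g m. dchain S d a c g m" using dchain_cat(1) by blast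
next
  fix a assume a: "a \<in> S"
  show "\<exists>T. openin (top_of_set S) T \<and> a \<in> T \<and> (\<forall>x\<in>T. \<exists>g m. dchain S d a x g m)"
  proof (rule exI[of _ "S \<inter> ball a d"], intro conjI ballI)
    show "openin (top_of_set S) (S \<inter> ball a d)" by (simp add: openin_open_Int)
    show "a \<in> S \<inter> ball a d" using a assms(2) by simp
    fix x assume x: "x \<in> S \<inter> ball a d"
    have "dchain S d a x (\<lambda>k. if k = 0 then a else x) 1"
      unfolding dchain_def using a x assms(2) by auto
    then show "\<exists>g m. dchain S d a x g m" by blast
  qed
qed



lemma link:
  assumes P: "ulc X e \<delta>" and d: "d > 0" and c: "c \<in> X" and y: "y \<in> X" "dist c y < \<delta>"
    and F: "finite F" "F \<subseteq> {f\<in>X. dist c f < \<delta>}"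
  shows "\<exists>g m. dchain (X \<inter> ball c e) d c y g m \<and> F \<subseteq> g ` {..m}"
  using F
proof (induction F rule: finite_induct)
  case empty
  obtain C where C: "connected C" "C \<subseteq> X" "c \<in> C" "y \<in> C" "C \<subseteq> ball c e"
    using P c y unfolding ulc_def by blast
  obtain g m where "dchain C d c y g m" using dchain_exists[OF C(1) d C(3,4)] by blast
  then have "dchain (X \<inter> ball c e) d c y g m" using C by (auto intro: dchain_mono)
  then show ?case by blast
next
  case (insert f F)
  obtain g m where gm: "dchain (X \<inter> ball c e) d c y g m" "F \<subseteq> g ` {..m}"
    using insert by auto
  have f: "f \<in> X" "dist c f < \<delta>" using insert by auto
  obtain C where C: "connected C" "C \<subseteq> X" "c \<in> C" "f \<in> C" "C \<subseteq> ball c e"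
    using P c f unfolding ulc_def by blast
  obtain g1 m1 where g1: "dchain C d c f g1 m1" using dchain_exists[OF C(1) d C(3,4)] by blast
  obtain g2 m2 where g2: "dchain C d f c g2 m2" using dchain_exists[OF C(1) d C(4,3)] by blast
  have g1': "dchain (X \<inter> ball c e) d c f g1 m1" using g1 C by (auto intro: dchain_mono)
  have g2': "dchain (X \<inter> ball c e) d f c g2 m2" using g2 C by (auto intro: dchain_mono)
  note a = dchain_cat[OF g1' g2']
  note b = dchain_cat[OF a(1) gm(1)]
  have "f \<in> g1 ` {..m1}" using g1 unfolding dchain_def by (auto intro!: image_eqI[where x=m1])
  then have "insert f F \<subseteq> cat (cat g1 m1 g2) (m1 + m2) g ` {..m1 + m2 + m}"
    using b(2) a(2) gm(2) by auto
  then show ?case using b(1) by blast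
qed

definition levinv :: "complex set \<Rightarrow> real \<Rightarrow> nat \<Rightarrow> (nat \<Rightarrow> complex) \<Rightarrow> bool" where
  "levinv X d N c \<longleftrightarrow> N \<ge> 1 \<and> (\<forall>i<N. c i \<in> X) \<and> (\<forall>i. Suc i < N \<longrightarrow> dist (c i) (c (Suc i)) < d)
      \<and> (\<forall>x\<in>X. \<exists>i<N. dist x (c i) < d)"

lemma divmod_aux: "k < (L::nat) \<Longrightarrow> (i*L+k) div L = i \<and> (i*L+k) mod L = k"
  by simp

lemma refine:
  assumes levinv: "levinv X \<delta> N c" and P: "ulc X e \<delta>" and d: "d > 0" and X: "compact X"
  shows "\<exists>L N' c'. L \<ge> 1 \<and> N' = N * L \<and> levinv X d N' c' \<and> (\<forall>j<N'. dist (c' j) (c (j div L)) < e)"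
proof -
  have N: "N \<ge> 1" and cX: "\<And>i. i < N \<Longrightarrow> c i \<in> X"
    and cs: "\<And>i. Suc i < N \<Longrightarrow> dist (c i) (c (Suc i)) < \<delta>"
    and cn: "\<And>x. x \<in> X \<Longrightarrow> \<exists>i<N. dist x (c i) < \<delta>"
    using levinv unfolding levinv_def by auto
  have \<delta>: "\<delta> > 0"
  proof -
    obtain i where "dist (c 0) (c i) < \<delta>" using cn[OF cX[of 0]] N by auto
    then show ?thesis using zero_le_dist[of "c 0" "c i"] by linarith
  qed
  obtain F where F: "F \<subseteq> X" "finite F" "X \<subseteq> (\<Union>f\<in>F. ball f d)"
  proof (rule compactE_image[OF X, of X "\<lambda>f. ball f d"])
    show "\<And>f. f \<in> X \<Longrightarrow> open (ball f d)" by simp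
    show "X \<subseteq> (\<Union>f\<in>X. ball f d)" using d by force
  qed
  define y where "y i = c (min (Suc i) (N - 1))" for i
  have y: "y i \<in> X" "dist (c i) (y i) < \<delta>" if "i < N" for i
  proof -
    show "y i \<in> X" unfolding y_def using cX N by simp
    show "dist (c i) (y i) < \<delta>"
    proof (cases "Suc i < N")
      case True then show ?thesis unfolding y_def using cs by simp
    next
      case False then have "min (Suc i) (N - 1) = i" using that by simp
      then show ?thesis unfolding y_def using \<delta> by simp
    qed
  qed
  have "\<forall>i\<in>{..<N}. \<exists>gm. dchain (X \<inter> ball (c i) e) d (c i) (y i) (fst gm) (snd gm)
          \<and> {f\<in>F. dist (c i) f < \<delta>} \<subseteq> fst gm ` {..snd gm}"
  proof
    fix i assume i: "i \<in> {..<N}"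
    have "finite {f\<in>F. dist (c i) f < \<delta>}" using F by simp
    then obtain g m where "dchain (X \<inter> ball (c i) e) d (c i) (y i) g m
          \<and> {f\<in>F. dist (c i) f < \<delta>} \<subseteq> g ` {..m}"
      using link[OF P d cX y, of i "{f\<in>F. dist (c i) f < \<delta>}"] i F(1) by auto
    then show "\<exists>gm. dchain (X \<inter> ball (c i) e) d (c i) (y i) (fst gm) (snd gm)
          \<and> {f\<in>F. dist (c i) f < \<delta>} \<subseteq> fst gm ` {..snd gm}" by (intro exI[of _ "(g,m)"]) simp
  qed
  from bchoice[OF this] obtain GM where GM0: "\<forall>i\<in>{..<N}. dchain (X \<inter> ball (c i) e) d (c i) (y i) (fst (GM i)) (snd (GM i))
          \<and> {f\<in>F. dist (c i) f < \<delta>} \<subseteq> fst (GM i) ` {..snd (GM i)}"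
    by blast
  have GM: "\<And>i. i < N \<Longrightarrow> dchain (X \<inter> ball (c i) e) d (c i) (y i) (fst (GM i)) (snd (GM i))
          \<and> {f\<in>F. dist (c i) f < \<delta>} \<subseteq> fst (GM i) ` {..snd (GM i)}"
    using GM0 by blast
  define G where "G i = fst (GM i)" for i
  define M where "M i = snd (GM i)" for i
  have G: "\<And>i. i < N \<Longrightarrow> dchain (X \<inter> ball (c i) e) d (c i) (y i) (G i) (M i)"
    and GF: "\<And>i. i < N \<Longrightarrow> {f\<in>F. dist (c i) f < \<delta>} \<subseteq> G i ` {..M i}"
    using GM unfolding G_def M_def by auto
  define L where "L = Suc (Max (M ` {..<N}))"
  have Mlt: "M i < L" if "i < N" for i
    unfolding L_def using that by (simp add: le_imp_less_Suc)
  have L1: "L \<ge> 1" unfolding L_def by simp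
  define c' where "c' j = G (j div L) (j mod L)" for j
  have c'ij: "c' (i*L+k) = G i k" if "k < L" for i k
    unfolding c'_def using that divmod_aux by simp
  have decomp: "\<exists>i k. j = i*L+k \<and> k < L \<and> i = j div L" for j
    using L1 by (metis div_mult_mod_eq mod_less_divisor mult.commute less_le_trans zero_less_one)
  have "levinv X d (N*L) c'"
    unfolding levinv_def
  proof (intro conjI allI impI ballI)
    show "1 \<le> N * L" using N L1 by simp
  next
    fix j assume j: "j < N * L"
    then have "j div L < N" by (simp add: less_mult_imp_div_less)
    then show "c' j \<in> X" unfolding c'_def using G unfolding dchain_def by blast
  next
    fix j assume j: "Suc j < N * L"
    obtain i k where ik: "j = i*L+k" "k < L" "i = j div L" using decomp by blast
    show "dist (c' j) (c' (Suc j)) < d"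
    proof (cases "Suc k < L")
      case True
      have "i < N" using j ik by (metis Suc_lessD less_mult_imp_div_less)
      have "Suc j = i*L + Suc k" using ik by simp
      then have "c' (Suc j) = G i (Suc k)" using c'ij[OF True, of i] by simp
      moreover have "c' j = G i k" using c'ij[OF ik(2), of i] unfolding ik(1)[symmetric] .
      ultimately show ?thesis using G[OF \<open>i < N\<close>] unfolding dchain_def by simp
    next
      case False
      then have kL: "Suc k = L" using ik by simp
      then have sj: "Suc j = Suc i * L + 0" using ik by simp
      have "Suc i < N" using j sj L1
        by (metis add_0_right mult_less_cancel2)
      have "c' (Suc j) = G (Suc i) 0" using c'ij[of 0 "Suc i"] sj L1 by simp
      also have "\<dots> = c (Suc i)" using G[OF \<open>Suc i < N\<close>] unfolding dchain_def by simp
      finally have 1: "c' (Suc j) = c (Suc i)" .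
      have "c' j = G i k" using c'ij[OF ik(2), of i] unfolding ik(1)[symmetric] .
      also have "\<dots> = y i" using G[of i] \<open>Suc i < N\<close> Mlt[of i] kL unfolding dchain_def by simp
      also have "\<dots> = c (Suc i)" unfolding y_def using \<open>Suc i < N\<close> by simp
      finally show ?thesis using 1 d by simp
    qed
  next
    fix x assume x: "x \<in> X"
    obtain f where f: "f \<in> F" "dist x f < d" using F(3) x by (auto simp: dist_commute)
    obtain i where i: "i < N" "dist f (c i) < \<delta>" using cn F(1) f(1) by blast
    then have "f \<in> G i ` {..M i}" using GF[OF i(1)] f(1) by (auto simp: dist_commute)
    then obtain k where k: "k \<le> M i" "f = G i k" by auto
    have kL: "k < L" using k Mlt[OF i(1)] by simp
    have "i*L+k < N*L"
    proof -
      have "i*L+k < i*L + L" using kL by simp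
      also have "\<dots> = Suc i * L" by simp
      also have "\<dots> \<le> N * L" using i(1) by (metis Suc_leI mult_le_mono1)
      finally show ?thesis .
    qed
    moreover have "c' (i*L+k) = f" using c'ij[OF kL] k by simp
    ultimately show "\<exists>j<N*L. dist x (c' j) < d" using f(2) by blast
  qed
  moreover have "\<forall>j<N*L. dist (c' j) (c (j div L)) < e"
  proof (intro allI impI)
    fix j assume j: "j < N*L"
    then have i: "j div L < N" by (simp add: less_mult_imp_div_less)
    have "c' j \<in> ball (c (j div L)) e" unfolding c'_def using G[OF i] unfolding dchain_def by blast
    then show "dist (c' j) (c (j div L)) < e" by (simp add: dist_commute)
  qed
  ultimately show ?thesis using L1 by blast
qed



definition idx :: "nat \<Rightarrow> real \<Rightarrow> nat" where
  "idx N t = min (N - 1) (nat \<lfloor>t * real N\<rfloor>)"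

lemma idx_less: "N \<ge> 1 \<Longrightarrow> idx N t < N"
  unfolding idx_def by simp

lemma predmul_div: "N \<ge> 1 \<Longrightarrow> L \<ge> (1::nat) \<Longrightarrow> (N*L - 1) div L = N - 1"
  by (rule div_nat_eqI) (auto simp: algebra_simps diff_mult_distrib2)

lemma idx_div:
  assumes "0 \<le> t" "t \<le> 1" "N \<ge> 1" "L \<ge> 1"
  shows "idx (N*L) t div L = idx N t"
proof -
  define a where "a = nat \<lfloor>t * real N\<rfloor>"
  define b where "b = nat \<lfloor>t * real (N*L)\<rfloor>"
  have x0: "t * real N \<ge> 0" "t * real (N*L) \<ge> 0" using assms by auto
  have a1: "real a \<le> t * real N" "t * real N < real a + 1" unfolding a_def using x0 by linarith+
  have b1: "real b \<le> t * real (N*L)" "t * real (N*L) < real b + 1" unfolding b_def using x0 by linarith+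
  have "real a * real L \<le> t * real N * real L" using a1 by (simp add: mult_right_mono)
  then have "real (a*L) \<le> t * real (N*L)" by (simp add: mult.assoc)
  then have l: "a*L \<le> b" unfolding b_def by (rule le_nat_floor)
  have "t * real N * real L < (real a + 1) * real L" using a1 assms by (simp add: mult_strict_right_mono)
  moreover have "(real a + 1) * real L = real (Suc a * L)" by (simp add: algebra_simps)
  moreover have "t * real N * real L = t * real (N*L)" by simp
  ultimately have "t * real (N*L) < real (Suc a * L)" by simp
  then have "real b < real (Suc a * L)" using b1 by linarith
  then have u: "b < Suc a * L" by (simp only: of_nat_less_iff)
  have bd: "b div L = a" by (rule div_nat_eqI) (use l u in \<open>auto simp: mult.commute\<close>)
  have e: "(N*L - 1) div L = N - 1" using predmul_div assms by simp
  show ?thesis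
  proof (cases "b \<le> N*L - 1")
    case True
    then have "b div L \<le> (N*L - 1) div L" by (simp add: div_le_mono)
    then have "a \<le> N - 1" using bd e by simp
    then show ?thesis unfolding idx_def using True bd a_def b_def by (simp add: min_absorb2)
  next
    case False
    have "N*L \<le> b" using False by simp
    then have "(N*L) div L \<le> b div L" by (rule div_le_mono)
    then have "N \<le> a" using bd assms by simp
    then show ?thesis unfolding idx_def using False e a_def b_def by simp
  qed
qed

lemma idx_frac: "N \<ge> 1 \<Longrightarrow> i < N \<Longrightarrow> idx N (real i / real N) = i"
  unfolding idx_def by simp

lemma idx_adj:
  assumes "0 \<le> s" "0 \<le> t" "N \<ge> 1" "\<bar>s - t\<bar> < 1 / real N"
  shows "idx N s = idx N t \<or> Suc (idx N s) = idx N t \<or> Suc (idx N t) = idx N s"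
proof -
  define A where "A = \<lfloor>s * real N\<rfloor>"
  define B where "B = \<lfloor>t * real N\<rfloor>"
  have "\<bar>s - t\<bar> * real N < 1" using assms by (simp add: field_simps)
  then have "\<bar>s * real N - t * real N\<bar> < 1"
    by (simp add: left_diff_distrib[symmetric] abs_mult)
  then have "A = B \<or> A = B + 1 \<or> B = A + 1" unfolding A_def B_def by linarith
  moreover have "A \<ge> 0" "B \<ge> 0" unfolding A_def B_def using assms by auto
  ultimately have "nat A = nat B \<or> nat A = Suc (nat B) \<or> nat B = Suc (nat A)" by auto
  then show ?thesis unfolding idx_def A_def[symmetric] B_def[symmetric] by (auto simp: min_def)
qed



lemma ulc_mono: "ulc X e d \<Longrightarrow> d' \<le> d \<Longrightarrow> ulc X e d'"
  unfolding ulc_def by force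

lemma HM:
  fixes X :: "complex set"
  assumes X: "compact X" "X \<noteq> {}" "connected X" "locally connected X"
  shows "\<exists>f. continuous_on {0..1::real} f \<and> X = f ` {0..1}"
proof -
  obtain x0 where x0: "x0 \<in> X" using X(2) by blast
  obtain B where B: "B > 0" "\<And>x. x \<in> X \<Longrightarrow> norm x \<le> B"
    using compact_imp_bounded[OF X(1)] unfolding bounded_pos by blast
  define E where "E = 2*B + 1"
  have E0: "E > 0" unfolding E_def using B by simp
  have dE: "dist x y < E" if "x \<in> X" "y \<in> X" for x y
  proof -
    have "dist x y \<le> norm x + norm y" by (simp add: dist_norm norm_triangle_ineq4)
    then show ?thesis using B(2)[OF that(1)] B(2)[OF that(2)] unfolding E_def by linarith
  qed
  define eps where "eps n = E / 2^n" for n :: nat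
  have eps0: "eps n > 0" for n unfolding eps_def using E0 by simp
  have epsS: "eps (Suc n) = eps n / 2" for n unfolding eps_def by simp
  have eps_small: "\<exists>n. eps n < e" if "e > 0" for e
  proof -
    have eE: "e / E > 0" using that E0 by simp
    obtain n where "(1/2::real)^n < e / E" using real_arch_pow_inv[OF eE, of "1/2"] by auto
    then have "E * (1/2)^n < e" using E0 by (simp add: field_simps)
    then show ?thesis unfolding eps_def by (auto simp: field_simps)
  qed
  have ulcE: "ulc X E E" unfolding ulc_def
  proof (intro ballI impI)
    fix x y assume xy: "x \<in> X" "y \<in> X" "dist x y < E"
    show "\<exists>C. connected C \<and> C \<subseteq> X \<and> x \<in> C \<and> y \<in> C \<and> C \<subseteq> ball x E"
      using xy X(3) dE by (intro exI[of _ X]) auto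
  qed
  have "\<forall>n. \<exists>\<delta>. 0 < \<delta> \<and> \<delta> \<le> eps n \<and> ulc X (eps n) \<delta> \<and> (n = 0 \<longrightarrow> \<delta> = E)"
  proof
    fix n show "\<exists>\<delta>. 0 < \<delta> \<and> \<delta> \<le> eps n \<and> ulc X (eps n) \<delta> \<and> (n = 0 \<longrightarrow> \<delta> = E)"
    proof (cases "n = 0")
      case True then show ?thesis using ulcE E0 unfolding eps_def by (intro exI[of _ E]) auto
    next
      case False
      obtain d where d: "d > 0" "ulc X (eps n) d" using unif_lc[OF X(1) X(4) eps0[of n]] by blast
      show ?thesis using d False eps0[of n]
        by (intro exI[of _ "min d (eps n)"]) (auto intro: ulc_mono)
    qed
  qed
  from choice[OF this] obtain D where D0: "\<forall>n. 0 < D n \<and> D n \<le> eps n \<and> ulc X (eps n) (D n) \<and> (n = 0 \<longrightarrow> D n = E)"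
    by blast
  have D: "\<And>n. 0 < D n \<and> D n \<le> eps n \<and> ulc X (eps n) (D n) \<and> (n = 0 \<longrightarrow> D n = E)"
    using D0 by blast
  define Q where "Q n Nc Nc' \<longleftrightarrow> (\<exists>L\<ge>1. fst Nc' = fst Nc * L \<and> levinv X (D (Suc n)) (fst Nc') (snd Nc')
      \<and> (\<forall>j<fst Nc'. dist (snd Nc' j) (snd Nc (j div L)) < eps n))"
    for n :: nat and Nc Nc' :: "nat \<times> (nat \<Rightarrow> complex)"
  define S where "S = rec_nat (1::nat, \<lambda>_::nat. x0) (\<lambda>n Nc. SOME Nc'. Q n Nc Nc')"
  have S0: "S 0 = (1, \<lambda>_. x0)" unfolding S_def by simp
  have SS: "S (Suc n) = (SOME Nc'. Q n (S n) Nc')" for n unfolding S_def by simp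
  have Qstep: "Q n (S n) (S (Suc n))" if inv0: "levinv X (D n) (fst (S n)) (snd (S n))" for n
  proof -
    obtain L N' c' where "L \<ge> 1 \<and> N' = fst (S n) * L \<and> levinv X (D (Suc n)) N' c'
        \<and> (\<forall>j<N'. dist (c' j) (snd (S n) (j div L)) < eps n)"
      using refine[OF inv0 _ _ X(1), of "eps n" "D (Suc n)"] D by blast
    then have "Q n (S n) (N', c')" unfolding Q_def by auto
    then show ?thesis unfolding SS by (rule someI)
  qed
  have inv: "levinv X (D n) (fst (S n)) (snd (S n))" for n
  proof (induction n)
    case 0
    show ?case unfolding S0 levinv_def using x0 dE D[of 0] by auto
  next
    case (Suc n)
    then show ?case using Qstep[OF Suc] unfolding Q_def by auto
  qed
  have Q: "Q n (S n) (S (Suc n))" for n using Qstep inv by blast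
  define NN where "NN n = fst (S n)" for n
  define cc where "cc n = snd (S n)" for n
  have NN1: "NN n \<ge> 1" for n using inv[of n] unfolding levinv_def NN_def by auto
  have ccX: "i < NN n \<Longrightarrow> cc n i \<in> X" for n i using inv[of n] unfolding levinv_def NN_def cc_def by auto
  have ccS: "Suc i < NN n \<Longrightarrow> dist (cc n i) (cc n (Suc i)) < D n" for n i
    using inv[of n] unfolding levinv_def NN_def cc_def by auto
  have ccN: "x \<in> X \<Longrightarrow> \<exists>i<NN n. dist x (cc n i) < D n" for n x
    using inv[of n] unfolding levinv_def NN_def cc_def by auto
  define p where "p n t = cc n (idx (NN n) t)" for n t
  have pX: "p n t \<in> X" for n t unfolding p_def using ccX idx_less NN1 by blast
  have pstep: "dist (p (Suc n) t) (p n t) < eps n" if t: "0 \<le> t" "t \<le> 1" for n t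
  proof -
    obtain L where L: "L \<ge> 1" "NN (Suc n) = NN n * L"
        "\<forall>j<NN (Suc n). dist (cc (Suc n) j) (cc n (j div L)) < eps n"
      using Q[of n] unfolding Q_def NN_def cc_def by auto
    have lt: "idx (NN (Suc n)) t < NN (Suc n)" using idx_less NN1 by blast
    have eq: "idx (NN (Suc n)) t div L = idx (NN n) t" unfolding L(2)
      using idx_div[OF t NN1 L(1)] .
    have "dist (cc (Suc n) (idx (NN (Suc n)) t)) (cc n (idx (NN (Suc n)) t div L)) < eps n"
      using L(3) lt by blast
    then have "dist (cc (Suc n) (idx (NN (Suc n)) t)) (cc n (idx (NN n) t)) < eps n"
      unfolding eq .
    then show ?thesis unfolding p_def .
  qed
  have pbound: "dist (p (n+k) t) (p n t) \<le> 2*eps n - 2*eps (n+k)" if t: "0 \<le> t" "t \<le> 1" for n k t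
  proof (induction k)
    case 0 then show ?case by simp
  next
    case (Suc k)
    have "dist (p (n + Suc k) t) (p n t) \<le> dist (p (Suc (n+k)) t) (p (n+k) t) + dist (p (n+k) t) (p n t)"
      by (simp add: dist_triangle)
    also have "\<dots> \<le> eps (n+k) + (2*eps n - 2*eps (n+k))" using pstep[OF t, of "n+k"] Suc by simp
    also have "\<dots> = 2*eps n - 2*eps (n + Suc k)" using epsS[of "n+k"] by simp
    finally show ?case .
  qed
  have pbound2: "dist (p m t) (p n t) \<le> 2*eps n" if t: "0 \<le> t" "t \<le> 1" "n \<le> m" for n m t
  proof -
    obtain k where "m = n + k" using t(3) le_Suc_ex by blast
    then show ?thesis using pbound[OF t(1,2), of n k] eps0[of m] by simp
  qed
  have conv: "convergent (\<lambda>n. p n t)" if t: "0 \<le> t" "t \<le> 1" for t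
  proof -
    have "Cauchy (\<lambda>n. p n t)"
    proof (rule metric_CauchyI)
      fix e :: real assume "e > 0"
      then obtain M where M: "eps M < e/4" using eps_small[of "e/4"] by auto
      show "\<exists>M. \<forall>m\<ge>M. \<forall>n\<ge>M. dist (p m t) (p n t) < e"
      proof (intro exI allI impI)
        fix m n assume mn: "M \<le> m" "M \<le> n"
        have "dist (p m t) (p n t) \<le> dist (p m t) (p M t) + dist (p n t) (p M t)"
          by (rule dist_triangle2)
        also have "\<dots> \<le> 2*eps M + 2*eps M" using pbound2[OF t mn(1)] pbound2[OF t mn(2)] by simp
        finally show "dist (p m t) (p n t) < e" using M by simp
      qed
    qed
    then show ?thesis by (simp add: Cauchy_convergent_iff)
  qed
  define P where "P t = lim (\<lambda>n. p n t)" for t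
  have Plim: "(\<lambda>n. p n t) \<longlonglongrightarrow> P t" if "0 \<le> t" "t \<le> 1" for t
    using conv[OF that] unfolding P_def by (simp add: convergent_LIMSEQ_iff)
  have PX: "P t \<in> X" if "0 \<le> t" "t \<le> 1" for t
    using closed_sequentially[OF compact_imp_closed[OF X(1)] pX Plim[OF that]] .
  have Pb: "dist (P t) (p n t) \<le> 2*eps n" if t: "0 \<le> t" "t \<le> 1" for t n
  proof -
    have "(\<lambda>k. p (k+n) t) \<longlonglongrightarrow> P t" using LIMSEQ_ignore_initial_segment[OF Plim[OF t]] .
    then have "(\<lambda>k. dist (p (k+n) t) (p n t)) \<longlonglongrightarrow> dist (P t) (p n t)"
      by (intro tendsto_intros)
    moreover have "\<exists>N. \<forall>k\<ge>N. dist (p (k+n) t) (p n t) \<le> 2*eps n"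
      using pbound2[OF t] by auto
    ultimately show ?thesis by (rule LIMSEQ_le_const2)
  qed
  have cont: "continuous_on {0..1} P"
    unfolding continuous_on_iff
  proof (intro ballI allI impI)
    fix s e assume s: "s \<in> {0..1::real}" and e: "(0::real) < e"
    obtain n where n: "eps n < e/5" using eps_small[of "e/5"] e by auto
    show "\<exists>d>0. \<forall>t\<in>{0..1}. dist t s < d \<longrightarrow> dist (P t) (P s) < e"
    proof (intro exI[of _ "1 / real (NN n)"] conjI ballI impI)
      show "0 < 1 / real (NN n)" using NN1[of n] by simp
      fix t assume t: "t \<in> {0..1::real}" and ts: "dist t s < 1 / real (NN n)"
      have "dist (p n t) (p n s) < D n"
      proof -
        have "idx (NN n) t = idx (NN n) s \<or> Suc (idx (NN n) t) = idx (NN n) s \<or> Suc (idx (NN n) s) = idx (NN n) t"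
          using idx_adj[of t s "NN n"] t s ts NN1[of n] by (simp add: dist_real_def)
        moreover have "idx (NN n) t < NN n" "idx (NN n) s < NN n" using idx_less NN1 by blast+
        ultimately consider "idx (NN n) t = idx (NN n) s"
          | "Suc (idx (NN n) t) = idx (NN n) s" "Suc (idx (NN n) t) < NN n"
          | "Suc (idx (NN n) s) = idx (NN n) t" "Suc (idx (NN n) s) < NN n"
          by (elim disjE) simp_all
        then show ?thesis
        proof cases
          case 1 then show ?thesis unfolding p_def using D[of n] by simp
        next
          case 2 then show ?thesis unfolding p_def using ccS[OF 2(2)] by simp
        next
          case 3 then show ?thesis unfolding p_def using ccS[OF 3(2)] by (simp add: dist_commute)
        qed
      qed
      moreover have "dist (P t) (p n t) \<le> 2*eps n" "dist (P s) (p n s) \<le> 2*eps n"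
        using Pb t s by auto
      moreover have "dist (P t) (P s) \<le> dist (P t) (p n t) + dist (p n t) (p n s) + dist (P s) (p n s)"
        using dist_triangle[of "P t" "P s" "p n t"] dist_triangle[of "p n t" "P s" "p n s"]
        by (simp add: dist_commute)
      ultimately show "dist (P t) (P s) < e" using D[of n] n by linarith
    qed
  qed
  have "X \<subseteq> P ` {0..1}"
  proof
    fix x assume x: "x \<in> X"
    have cl: "closed (P ` {0..1})"
      by (intro compact_imp_closed compact_continuous_image cont) simp
    have "\<forall>e>0. \<exists>y\<in>P ` {0..1}. dist y x < e"
    proof (intro allI impI)
      fix e :: real assume e: "e > 0"
      obtain n where n: "eps n < e/3" using eps_small[of "e/3"] e by auto
      obtain i where i: "i < NN n" "dist x (cc n i) < D n" using ccN[OF x] by blast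
      define t where "t = real i / real (NN n)"
      have t: "0 \<le> t" "t \<le> 1" unfolding t_def using i(1) by auto
      have "idx (NN n) t = i" unfolding t_def using idx_frac[OF NN1 i(1)] .
      then have pt: "p n t = cc n i" unfolding p_def by simp
      have "dist (P t) x \<le> dist (P t) (p n t) + dist x (p n t)"
        by (rule dist_triangle2)
      also have "\<dots> = dist (P t) (p n t) + dist x (cc n i)" unfolding pt ..
      also have "\<dots> < e" using Pb[OF t, of n] i(2) D[of n] n by linarith
      finally have "dist (P t) x < e" .
      moreover have "P t \<in> P ` {0..1}" using t by simp
      ultimately show "\<exists>y\<in>P ` {0..1}. dist y x < e" by blast
    qed
    then show "x \<in> P ` {0..1}" by (rule iffD1[OF closed_approachable[OF cl]])
  qed
  moreover have "P ` {0..1} \<subseteq> X" using PX by auto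
  ultimately have eq: "X = P ` {0..1}" by (rule equalityI)
  show ?thesis by (intro exI[of _ P] conjI cont eq)
qed


theorem proposition6p1:
  fixes X :: "complex set"
  assumes "compact X"
  shows "((\<exists>f\<in>F0. X = f ` {0..1}) \<longleftrightarrow>
          (0 \<in> X \<and> (\<exists>\<alpha>::real. symmetric_wrt_line X \<alpha>) \<and>
           (\<exists>f. continuous_on {0..1::real} f \<and> X = f ` {0..1})))
       \<and> ((0 \<in> X \<and> (\<exists>\<alpha>::real. symmetric_wrt_line X \<alpha>) \<and>
           (\<exists>f. continuous_on {0..1::real} f \<and> X = f ` {0..1}))
          \<longleftrightarrow>
          (0 \<in> X \<and> (\<exists>\<alpha>::real. symmetric_wrt_line X \<alpha>) \<and>
           connected X \<and> locally connected X))"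
proof (rule conjI; rule iffI)
  assume "\<exists>f\<in>F0. X = f ` {0..1}"
  then obtain f where f: "f \<in> F0" "X = f ` {0..1}" by blast
  show "0 \<in> X \<and> (\<exists>\<alpha>::real. symmetric_wrt_line X \<alpha>) \<and>
           (\<exists>f. continuous_on {0..1::real} f \<and> X = f ` {0..1})"
    using F0_imp[OF f(1)] f(2) by blast
next
  assume h: "0 \<in> X \<and> (\<exists>\<alpha>::real. symmetric_wrt_line X \<alpha>) \<and>
           (\<exists>f. continuous_on {0..1::real} f \<and> X = f ` {0..1})"
  then obtain \<alpha> g where "symmetric_wrt_line X \<alpha>" "continuous_on {0..1::real} g" "X = g ` {0..1}"
    by blast
  then show "\<exists>f\<in>F0. X = f ` {0..1}" using imp_F0 h by blast
next
  assume h: "0 \<in> X \<and> (\<exists>\<alpha>::real. symmetric_wrt_line X \<alpha>) \<and>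
           (\<exists>f. continuous_on {0..1::real} f \<and> X = f ` {0..1})"
  then obtain g where "continuous_on {0..1::real} g" "X = g ` {0..1}" by blast
  then have "connected X \<and> locally connected X" using image_lc by blast
  then show "0 \<in> X \<and> (\<exists>\<alpha>::real. symmetric_wrt_line X \<alpha>) \<and> connected X \<and> locally connected X"
    using h by blast
next
  assume h: "0 \<in> X \<and> (\<exists>\<alpha>::real. symmetric_wrt_line X \<alpha>) \<and> connected X \<and> locally connected X"
  then have "X \<noteq> {}" by blast
  then have "\<exists>f. continuous_on {0..1::real} f \<and> X = f ` {0..1}" using HM assms h by blast
  then show "0 \<in> X \<and> (\<exists>\<alpha>::real. symmetric_wrt_line X \<alpha>) \<and>
           (\<exists>f. continuous_on {0..1::real} f \<and> X = f ` {0..1})" using h by blast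
qed

end
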